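(* Let $N\ge 1$ be an integer. If a function class $\mathcal{G}$ of functions $\mathcal{Z}\to\mathbb{R}$ is an $N$-composite of a function class $\mathcal{F}$ of functions $\mathcal{X}\to\mathbb{R}$, then $\mathsf{dis}(\mathcal{G}) \le N\,\mathsf{dis}(\mathcal{F})$.
   Context: For a measurable space $\mathcal{X}$ and a class $\mathcal{F}$ of measurable functions $\mathcal{X}\to\mathbb{R}$, the disagreement coefficient is $$\mathsf{dis}(\mathcal{F}) = \sup_{\varepsilon,\delta>0}\ \sup_{\nu\in\Delta(\mathcal{X})} \frac{\delta^2}{\varepsilon^2}\,\mathbb{P}_{p\sim\nu}\Big(\exists f\in\mathcal{F}:\ \mathbb{E}_{q\sim\nu}[f(q)^2]\le\varepsilon^2\ \text{and}\ |f(p)|>\delta\Big),$$ where $\Delta(\mathcal{X})$ is the set of probability measures on $\mathcal{X}$. A class $\mathcal{G}$ of functions $\mathcal{Z}\to\mathbb{R}$ is an $N$-composite of $\mathcal{F}$ (functions $\mathcal{X}\to\mathbb{R}$) if there is a partition of $\mathcal{Z}$ into disjoint measurable sets $\mathcal{Z}_1,\dots,\mathcal{Z}_N$ and measurable maps $h_i:\mathcal{Z}_i\to\mathcal{X}$, $i\in[N]$, such that for every $g\in\mathcal{G}$ there exist $f_1,\dots,f_N\in\mathcal{F}$ with $g(x)=f_i(h_i(x))$ for all $x\in\mathcal{Z}_i$ and all $i\in[N]$. *)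

theory Defs
  imports "HOL-Probability.Probability"
begin

definition prob_measures :: "'a measure \<Rightarrow> 'a measure set" where
  "prob_measures X = {\<nu>. prob_space \<nu> \<and> sets \<nu> = sets X}"

text \<open>Disagreement coefficient (valued in [0,\<infinity>]); the probability of the
  (possibly non-measurable) event is taken as outer probability.\<close>
definition dis :: "'a measure \<Rightarrow> ('a \<Rightarrow> real) set \<Rightarrow> ennreal" where
  "dis X F = (SUP (\<epsilon>, \<delta>, \<nu>) \<in> {(\<epsilon>::real, \<delta>::real, \<nu>). \<epsilon> > 0 \<and> \<delta> > 0 \<and> \<nu> \<in> prob_measures X}.
      ennreal (\<delta>\<^sup>2 / \<epsilon>\<^sup>2) *
      outer_measure_of \<nu> {p \<in> space X. \<exists>f\<in>F.
          (\<integral>\<^sup>+ q. ennreal ((f q)\<^sup>2) \<partial>\<nu>) \<le> ennreal (\<epsilon>\<^sup>2) \<and> \<bar>f p\<bar> > \<delta>})"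

definition composite :: "nat \<Rightarrow> 'z measure \<Rightarrow> ('z \<Rightarrow> real) set \<Rightarrow> 'x measure \<Rightarrow> ('x \<Rightarrow> real) set \<Rightarrow> bool" where
  "composite N Z G X F \<longleftrightarrow>
     (\<exists>(Zp :: nat \<Rightarrow> 'z set) (h :: nat \<Rightarrow> 'z \<Rightarrow> 'x).
        (\<forall>i<N. Zp i \<in> sets Z) \<and>
        (\<forall>i<N. \<forall>j<N. i \<noteq> j \<longrightarrow> Zp i \<inter> Zp j = {}) \<and>
        (\<Union>i<N. Zp i) = space Z \<and>
        (\<forall>i<N. h i \<in> measurable (restrict_space Z (Zp i)) X) \<and>
        (\<forall>g\<in>G. \<exists>f :: nat \<Rightarrow> 'x \<Rightarrow> real. (\<forall>i<N. f i \<in> F) \<and>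
            (\<forall>i<N. \<forall>x\<in>Zp i. g x = f i (h i x))))"

end

theory Submission
  imports Defs
begin

lemma part_lemma:
  fixes Z :: "'z measure" and X :: "'x measure"
    and G :: "('z \<Rightarrow> real) set" and F :: "('x \<Rightarrow> real) set"
  assumes F: "F \<subseteq> borel_measurable X"
    and nu: "prob_space \<nu>" "sets \<nu> = sets Z"
    and eps: "\<epsilon> > 0" and del: "\<delta> > 0"
    and Zi: "Zi \<in> sets Z"
    and hi: "hi \<in> measurable (restrict_space Z Zi) X"
    and comp: "\<forall>g\<in>G. \<exists>f\<in>F. \<forall>x\<in>Zi. g x = f (hi x)"
  shows "\<exists>C\<in>sets Z. {p \<in> Zi. \<exists>g\<in>G. (\<integral>\<^sup>+ q. ennreal ((g q)\<^sup>2) \<partial>\<nu>) \<le> ennreal (\<epsilon>\<^sup>2) \<and> \<bar>g p\<bar> > \<delta>} \<subseteq> C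
     \<and> ennreal (\<delta>\<^sup>2 / \<epsilon>\<^sup>2) * emeasure \<nu> C \<le> dis X F"
proof -
  interpret P: prob_space \<nu> by fact
  have spnu: "space \<nu> = space Z" using nu(2) by (rule sets_eq_imp_space_eq)
  have Zinu: "Zi \<in> sets \<nu>" using Zi nu by simp
  have Zisp: "Zi \<subseteq> space Z" using Zi sets.sets_into_space by blast
  define w where "w = measure \<nu> Zi"
  have w01: "0 \<le> w" "w \<le> 1" unfolding w_def by auto
  have ew: "emeasure \<nu> Zi = ennreal w" unfolding w_def by (simp add: P.emeasure_eq_measure)
  show ?thesis
  proof (cases "w = 0")
    case True
    show ?thesis
      by (rule bexI[of _ Zi]) (use Zi True ew in auto)
  next
    case False
    then have wpos: "w > 0" using w01 by simp
    define R where "R = restrict_space \<nu> Zi"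
    have spR: "space R = Zi" unfolding R_def using Zisp spnu by (simp add: space_restrict_space Int_absorb2)
    have hiR: "hi \<in> measurable R X"
      unfolding R_def using hi by (simp add: measurable_cong_sets[OF sets_restrict_space_cong[OF nu(2)] refl])
    define \<mu> where "\<mu> = scale_measure (ennreal (1/w)) (distr R X hi)"
    have sets\<mu>: "sets \<mu> = sets X" unfolding \<mu>_def by simp
    have em\<mu>: "emeasure \<mu> B = ennreal (1/w) * emeasure \<nu> (hi -` B \<inter> Zi)" if "B \<in> sets X" for B
    proof -
      have "emeasure \<mu> B = ennreal (1/w) * emeasure R (hi -` B \<inter> space R)"
        unfolding \<mu>_def by (simp add: emeasure_distr[OF hiR that])
      also have "emeasure R (hi -` B \<inter> space R) = emeasure \<nu> (hi -` B \<inter> Zi)"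
        unfolding R_def spR[unfolded R_def] using Zinu
        by (intro emeasure_restrict_space) (auto simp: spnu Int_absorb2 Zisp)
      finally show ?thesis by (simp add: spR)
    qed
    have prob\<mu>: "prob_space \<mu>"
    proof
      have "hi -` space X \<inter> Zi = Zi" using measurable_space[OF hiR] spR by auto
      then show "emeasure \<mu> (space \<mu>) = 1"
        using em\<mu>[of "space X"] wpos ew sets_eq_imp_space_eq[OF sets\<mu>]
        by (simp add: space_scale_measure ennreal_mult''[symmetric] del: ennreal_mult'')
    qed
    define \<epsilon>' where "\<epsilon>' = \<epsilon> / sqrt w"
    have eps': "\<epsilon>' > 0" unfolding \<epsilon>'_def using eps wpos by simp
    have eps'2: "\<epsilon>'\<^sup>2 = \<epsilon>\<^sup>2 / w" unfolding \<epsilon>'_def using wpos by (simp add: power_divide)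
    define S where "S = {p \<in> space X. \<exists>f\<in>F.
          (\<integral>\<^sup>+ q. ennreal ((f q)\<^sup>2) \<partial>\<mu>) \<le> ennreal (\<epsilon>'\<^sup>2) \<and> \<bar>f p\<bar> > \<delta>}"
    have disle: "ennreal (\<delta>\<^sup>2 / \<epsilon>'\<^sup>2) * outer_measure_of \<mu> S \<le> dis X F"
      unfolding dis_def S_def
      by (rule SUP_upper2[of "(\<epsilon>', \<delta>, \<mu>)"]) (use eps' del prob\<mu> sets\<mu> in \<open>auto simp: prob_measures_def\<close>)
    obtain B where B: "B \<in> sets \<mu>" "S \<subseteq> B" "outer_measure_of \<mu> S = emeasure \<mu> B"
      using outer_measure_of_attain[of S \<mu>] unfolding S_def using sets_eq_imp_space_eq[OF sets\<mu>] by auto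
    have BX: "B \<in> sets X" using B sets\<mu> by simp
    define C where "C = hi -` B \<inter> Zi"
    have CZ: "C \<in> sets Z"
    proof -
      have "hi -` B \<inter> space (restrict_space Z Zi) \<in> sets (restrict_space Z Zi)"
        using measurable_sets[OF hi BX] .
      moreover have "space (restrict_space Z Zi) = Zi" using Zisp by (simp add: space_restrict_space Int_absorb2)
      ultimately show ?thesis unfolding C_def using Zi by (simp add: sets_restrict_space_iff)
    qed
    have sub: "{p \<in> Zi. \<exists>g\<in>G. (\<integral>\<^sup>+ q. ennreal ((g q)\<^sup>2) \<partial>\<nu>) \<le> ennreal (\<epsilon>\<^sup>2) \<and> \<bar>g p\<bar> > \<delta>} \<subseteq> C"
    proof
      fix p assume "p \<in> {p \<in> Zi. \<exists>g\<in>G. (\<integral>\<^sup>+ q. ennreal ((g q)\<^sup>2) \<partial>\<nu>) \<le> ennreal (\<epsilon>\<^sup>2) \<and> \<bar>g p\<bar> > \<delta>}"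
      then obtain g where p: "p \<in> Zi" and g: "g \<in> G" "(\<integral>\<^sup>+ q. ennreal ((g q)\<^sup>2) \<partial>\<nu>) \<le> ennreal (\<epsilon>\<^sup>2)" "\<bar>g p\<bar> > \<delta>"
        by auto
      obtain f where f: "f \<in> F" "\<forall>x\<in>Zi. g x = f (hi x)" using comp g by auto
      have fm: "(\<lambda>q. ennreal ((f q)\<^sup>2)) \<in> borel_measurable X" using f F by auto
      have "(\<integral>\<^sup>+ q. ennreal ((f q)\<^sup>2) \<partial>\<mu>) = ennreal (1/w) * (\<integral>\<^sup>+ q. ennreal ((f q)\<^sup>2) \<partial>distr R X hi)"
        unfolding \<mu>_def by (rule nn_integral_scale_measure) (use fm in simp)
      also have "(\<integral>\<^sup>+ q. ennreal ((f q)\<^sup>2) \<partial>distr R X hi) = (\<integral>\<^sup>+ q. ennreal ((f (hi q))\<^sup>2) \<partial>R)"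
        by (rule nn_integral_distr[OF hiR]) (use fm in simp)
      also have "\<dots> = (\<integral>\<^sup>+ q. ennreal ((g q)\<^sup>2) \<partial>R)"
        by (rule nn_integral_cong) (use f spR in auto)
      also have "\<dots> = (\<integral>\<^sup>+ q. ennreal ((g q)\<^sup>2) * indicator Zi q \<partial>\<nu>)"
        unfolding R_def by (rule nn_integral_restrict_space) (use Zinu spnu Zisp in \<open>simp add: Int_absorb2\<close>)
      also have "\<dots> \<le> (\<integral>\<^sup>+ q. ennreal ((g q)\<^sup>2) \<partial>\<nu>)"
        by (rule nn_integral_mono) (auto simp: indicator_def)
      also have "\<dots> \<le> ennreal (\<epsilon>\<^sup>2)" by fact
      finally have "(\<integral>\<^sup>+ q. ennreal ((f q)\<^sup>2) \<partial>\<mu>) \<le> ennreal (1/w) * ennreal (\<epsilon>\<^sup>2)"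
        by (simp add: mult_left_mono)
      also have "\<dots> = ennreal (\<epsilon>'\<^sup>2)" using wpos by (simp add: eps'2 ennreal_mult''[symmetric] del: ennreal_mult'')
      finally have "(\<integral>\<^sup>+ q. ennreal ((f q)\<^sup>2) \<partial>\<mu>) \<le> ennreal (\<epsilon>'\<^sup>2)" .
      moreover have "hi p \<in> space X" using measurable_space[OF hiR] spR p by auto
      ultimately have "hi p \<in> S" unfolding S_def using f g p by auto
      then show "p \<in> C" unfolding C_def using B p by auto
    qed
    have "emeasure \<nu> C = ennreal w * emeasure \<mu> B"
      using em\<mu>[OF BX] wpos unfolding C_def
      by (simp add: mult.assoc[symmetric] ennreal_mult''[symmetric] del: ennreal_mult'')
    then have "ennreal (\<delta>\<^sup>2 / \<epsilon>\<^sup>2) * emeasure \<nu> C = ennreal (\<delta>\<^sup>2 / \<epsilon>'\<^sup>2) * outer_measure_of \<mu> S"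
      using wpos B(3) by (simp add: eps'2 mult.assoc[symmetric] ennreal_mult''[symmetric] del: ennreal_mult'')
    with disle have "ennreal (\<delta>\<^sup>2 / \<epsilon>\<^sup>2) * emeasure \<nu> C \<le> dis X F" by simp
    with CZ sub show ?thesis by blast
  qed
qed

theorem mainTheorem4:
  fixes N :: nat and Z :: "'z measure" and X :: "'x measure"
    and G :: "('z \<Rightarrow> real) set" and F :: "('x \<Rightarrow> real) set"
  assumes "N \<ge> 1"
    and "F \<subseteq> borel_measurable X"
    and "G \<subseteq> borel_measurable Z"
    and "composite N Z G X F"
  shows "dis Z G \<le> of_nat N * dis X F"
proof -
  obtain Zp :: "nat \<Rightarrow> 'z set" and h :: "nat \<Rightarrow> 'z \<Rightarrow> 'x" where
    Zp: "\<forall>i<N. Zp i \<in> sets Z" and cov: "(\<Union>i<N. Zp i) = space Z"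
    and h: "\<forall>i<N. h i \<in> measurable (restrict_space Z (Zp i)) X"
    and gf: "\<forall>g\<in>G. \<exists>f :: nat \<Rightarrow> 'x \<Rightarrow> real. (\<forall>i<N. f i \<in> F) \<and> (\<forall>i<N. \<forall>x\<in>Zp i. g x = f i (h i x))"
    using assms(4) unfolding composite_def by blast
  show ?thesis
    unfolding dis_def[of Z G]
  proof (rule SUP_least, clarify)
    fix \<epsilon> \<delta> :: real and \<nu> assume eps: "\<epsilon> > 0" and del: "\<delta> > 0" and nuP: "\<nu> \<in> prob_measures Z"
    have nu: "prob_space \<nu>" "sets \<nu> = sets Z" using nuP unfolding prob_measures_def by auto
    have "\<forall>i\<in>{..<N}. \<exists>C. C \<in> sets Z \<and> {p \<in> Zp i. \<exists>g\<in>G. (\<integral>\<^sup>+ q. ennreal ((g q)\<^sup>2) \<partial>\<nu>) \<le> ennreal (\<epsilon>\<^sup>2) \<and> \<bar>g p\<bar> > \<delta>} \<subseteq> C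
     \<and> ennreal (\<delta>\<^sup>2 / \<epsilon>\<^sup>2) * emeasure \<nu> C \<le> dis X F"
    proof
      fix i assume "i \<in> {..<N}"
      then have i: "i < N" by simp
      have comp: "\<forall>g\<in>G. \<exists>f\<in>F. \<forall>x\<in>Zp i. g x = f (h i x)"
        using gf i by metis
      show "\<exists>C. C \<in> sets Z \<and> {p \<in> Zp i. \<exists>g\<in>G. (\<integral>\<^sup>+ q. ennreal ((g q)\<^sup>2) \<partial>\<nu>) \<le> ennreal (\<epsilon>\<^sup>2) \<and> \<bar>g p\<bar> > \<delta>} \<subseteq> C
     \<and> ennreal (\<delta>\<^sup>2 / \<epsilon>\<^sup>2) * emeasure \<nu> C \<le> dis X F"
        using part_lemma[OF assms(2) nu eps del Zp[rule_format, OF i] h[rule_format, OF i] comp] by blast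
    qed
    from bchoice[OF this] obtain C where C0: "\<forall>i\<in>{..<N}. C i \<in> sets Z \<and> {p \<in> Zp i. \<exists>g\<in>G. (\<integral>\<^sup>+ q. ennreal ((g q)\<^sup>2) \<partial>\<nu>) \<le> ennreal (\<epsilon>\<^sup>2) \<and> \<bar>g p\<bar> > \<delta>} \<subseteq> C i
     \<and> ennreal (\<delta>\<^sup>2 / \<epsilon>\<^sup>2) * emeasure \<nu> (C i) \<le> dis X F"
      by blast
    then have C: "\<And>i. i < N \<Longrightarrow> C i \<in> sets Z"
      "\<And>i. i < N \<Longrightarrow> {p \<in> Zp i. \<exists>g\<in>G. (\<integral>\<^sup>+ q. ennreal ((g q)\<^sup>2) \<partial>\<nu>) \<le> ennreal (\<epsilon>\<^sup>2) \<and> \<bar>g p\<bar> > \<delta>} \<subseteq> C i"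
      "\<And>i. i < N \<Longrightarrow> ennreal (\<delta>\<^sup>2 / \<epsilon>\<^sup>2) * emeasure \<nu> (C i) \<le> dis X F"
      by simp_all
    let ?E = "{p \<in> space Z. \<exists>g\<in>G. (\<integral>\<^sup>+ q. ennreal ((g q)\<^sup>2) \<partial>\<nu>) \<le> ennreal (\<epsilon>\<^sup>2) \<and> \<bar>g p\<bar> > \<delta>}"
    have sub: "?E \<subseteq> (\<Union>i<N. C i)"
    proof
      fix p assume p: "p \<in> ?E"
      then obtain i where "i < N" "p \<in> Zp i" using cov by blast
      then show "p \<in> (\<Union>i<N. C i)" using C(2)[of i] p by blast
    qed
    have Cs: "(\<Union>i<N. C i) \<in> sets \<nu>" using C(1) nu(2) by auto
    have "outer_measure_of \<nu> ?E \<le> emeasure \<nu> (\<Union>i<N. C i)"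
      unfolding outer_measure_of_def by (rule INF_lower) (use Cs sub in auto)
    also have "\<dots> \<le> (\<Sum>i<N. emeasure \<nu> (C i))"
      by (rule emeasure_subadditive_finite) (use C(1) nu(2) in auto)
    finally have "ennreal (\<delta>\<^sup>2 / \<epsilon>\<^sup>2) * outer_measure_of \<nu> ?E \<le> ennreal (\<delta>\<^sup>2 / \<epsilon>\<^sup>2) * (\<Sum>i<N. emeasure \<nu> (C i))"
      by (rule mult_left_mono) simp
    also have "\<dots> = (\<Sum>i<N. ennreal (\<delta>\<^sup>2 / \<epsilon>\<^sup>2) * emeasure \<nu> (C i))"
      by (simp add: sum_distrib_left)
    also have "\<dots> \<le> (\<Sum>i<N. dis X F)"
      by (rule sum_mono) (use C(3) in auto)
    also have "\<dots> = of_nat N * dis X F" by simp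
    finally show "ennreal (\<delta>\<^sup>2 / \<epsilon>\<^sup>2) * outer_measure_of \<nu> ?E \<le> of_nat N * dis X F" .
  qed
qed

end
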